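(* Let $s\ge1$ be an integer, let $(G,Z)$ be a monic plantation, and let $\mathcal{S}$ be a normal set of transitions of $(G,Z)$. Then there exists $X\subseteq Z$ with $|X|\le\phi(s)$ such that at most $|Z|$ members of $\mathcal{S}$ have no foot in $X$.
   Context: Graphs are finite and simple. Two subgraphs are anticomplete if their vertex sets are disjoint and no edge joins them. $G$ is $s\mathcal{O}$-free if no $s$ cycles of $G$ are pairwise vertex-disjoint and pairwise anticomplete. $Z\subseteq V(G)$ is cycle-hitting if every cycle of $G$ has a vertex in $Z$. A plantation is a pair $(G,Z)$ with $G$ an $s\mathcal{O}$-free graph and $Z$ cycle-hitting. Let $F=G\setminus Z$ and $N$ the set of vertices of $V(G)\setminus Z$ with a neighbour in $Z$. $(G,Z)$ is monic if $Z$ is stable and each vertex of $N$ has exactly one neighbour in $Z$. A transition is a path of $F$ of length at least one with both ends in $N$ and no internal vertex in $N$; a vertex of $Z$ adjacent to an end of a transition $P$ is a foot of $P$. A set $\mathcal{S}$ of transitions is normal if (i) for all distinct $P,Q\in\mathcal{S}$, either $P,Q$ are anticomplete or have a common end, and (ii) each $P\in\mathcal{S}$ has an edge belonging to no other member of $\mathcal{S}$. $\phi(s)\ge0$ denotes a number (which exists by the Erdős–Pósa theorem) such that every multigraph in which no $s$ cycles are pairwise vertex-disjoint has a set of at most $\phi(s)$ vertices meeting every cycle; in multigraphs, loops and pairs of parallel edges count as cycles. *)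

theory Defs
  imports Main "HOL-Library.Multiset"
begin

definition graph :: "'a set \<Rightarrow> 'a set set \<Rightarrow> bool" where
  "graph V E \<longleftrightarrow> finite V \<and> (\<forall>e\<in>E. \<exists>u v. e = {u, v} \<and> u \<noteq> v \<and> u \<in> V \<and> v \<in> V)"

definition is_cycle :: "'a set \<Rightarrow> 'a set set \<Rightarrow> 'a list \<Rightarrow> bool" where
  "is_cycle V E C \<longleftrightarrow> distinct C \<and> length C \<ge> 3 \<and> set C \<subseteq> V \<and>
     (\<forall>i < length C. {C ! i, C ! ((i + 1) mod length C)} \<in> E)"

definition anticomplete :: "'a set set \<Rightarrow> 'a set \<Rightarrow> 'a set \<Rightarrow> bool" where
  "anticomplete E A B \<longleftrightarrow> A \<inter> B = {} \<and> (\<forall>a\<in>A. \<forall>b\<in>B. {a, b} \<notin> E)"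

definition sO_free :: "nat \<Rightarrow> 'a set \<Rightarrow> 'a set set \<Rightarrow> bool" where
  "sO_free s V E \<longleftrightarrow> \<not> (\<exists>Cs. length Cs = s \<and> (\<forall>C\<in>set Cs. is_cycle V E C) \<and>
      (\<forall>i < s. \<forall>j < s. i \<noteq> j \<longrightarrow> anticomplete E (set (Cs ! i)) (set (Cs ! j))))"

definition cycle_hitting :: "'a set \<Rightarrow> 'a set set \<Rightarrow> 'a set \<Rightarrow> bool" where
  "cycle_hitting V E Z \<longleftrightarrow> Z \<subseteq> V \<and> (\<forall>C. is_cycle V E C \<longrightarrow> set C \<inter> Z \<noteq> {})"

definition plantation :: "nat \<Rightarrow> 'a set \<Rightarrow> 'a set set \<Rightarrow> 'a set \<Rightarrow> bool" where
  "plantation s V E Z \<longleftrightarrow> graph V E \<and> sO_free s V E \<and> cycle_hitting V E Z"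

definition attach :: "'a set \<Rightarrow> 'a set set \<Rightarrow> 'a set \<Rightarrow> 'a set" where
  "attach V E Z = {v \<in> V - Z. \<exists>z\<in>Z. {v, z} \<in> E}"

definition stable :: "'a set set \<Rightarrow> 'a set \<Rightarrow> bool" where
  "stable E Z \<longleftrightarrow> (\<forall>u\<in>Z. \<forall>v\<in>Z. {u, v} \<notin> E)"

definition monic_plantation :: "nat \<Rightarrow> 'a set \<Rightarrow> 'a set set \<Rightarrow> 'a set \<Rightarrow> bool" where
  "monic_plantation s V E Z \<longleftrightarrow> plantation s V E Z \<and> stable E Z \<and>
     (\<forall>v\<in>attach V E Z. card {z\<in>Z. {v, z} \<in> E} = 1)"

definition is_path :: "'a set \<Rightarrow> 'a set set \<Rightarrow> 'a list \<Rightarrow> bool" where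
  "is_path W E P \<longleftrightarrow> distinct P \<and> P \<noteq> [] \<and> set P \<subseteq> W \<and>
     (\<forall>i. Suc i < length P \<longrightarrow> {P ! i, P ! Suc i} \<in> E)"

definition path_edges :: "'a list \<Rightarrow> 'a set set" where
  "path_edges P = {{P ! i, P ! Suc i} | i. Suc i < length P}"

definition path_ends :: "'a list \<Rightarrow> 'a set" where
  "path_ends P = {hd P, last P}"

definition transition :: "'a set \<Rightarrow> 'a set set \<Rightarrow> 'a set \<Rightarrow> 'a list \<Rightarrow> bool" where
  "transition V E Z P \<longleftrightarrow> is_path (V - Z) E P \<and> length P \<ge> 2 \<and>
     hd P \<in> attach V E Z \<and> last P \<in> attach V E Z \<and>
     (\<forall>i. 0 < i \<and> i < length P - 1 \<longrightarrow> P ! i \<notin> attach V E Z)"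

definition feet :: "'a set set \<Rightarrow> 'a set \<Rightarrow> 'a list \<Rightarrow> 'a set" where
  "feet E Z P = {z \<in> Z. \<exists>v\<in>path_ends P. {v, z} \<in> E}"

definition normal_set :: "'a set \<Rightarrow> 'a set set \<Rightarrow> 'a set \<Rightarrow> 'a list set \<Rightarrow> bool" where
  "normal_set V E Z S \<longleftrightarrow> (\<forall>P\<in>S. transition V E Z P) \<and>
     (\<forall>P\<in>S. \<forall>Q\<in>S. P \<noteq> Q \<longrightarrow>
        anticomplete E (set P) (set Q) \<or> path_ends P \<inter> path_ends Q \<noteq> {}) \<and>
     (\<forall>P\<in>S. \<exists>e\<in>path_edges P. \<forall>Q\<in>S. Q \<noteq> P \<longrightarrow> e \<notin> path_edges Q)"

text \<open>A finite multigraph: vertex set V, multiset M of edges, each edge a set of 1 (loop) or 2 vertices.\<close>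
definition multigraph :: "nat set \<Rightarrow> nat set multiset \<Rightarrow> bool" where
  "multigraph V M \<longleftrightarrow> finite V \<and> (\<forall>e\<in>#M. e \<noteq> {} \<and> e \<subseteq> V \<and> card e \<le> 2)"

text \<open>Vertex sets of cycles of a multigraph: loops, pairs of parallel edges, ordinary cycles.\<close>
definition mg_cycle :: "nat set \<Rightarrow> nat set multiset \<Rightarrow> nat set \<Rightarrow> bool" where
  "mg_cycle V M C \<longleftrightarrow>
     (\<exists>v\<in>V. C = {v} \<and> {v} \<in># M) \<or>
     (\<exists>u\<in>V. \<exists>v\<in>V. u \<noteq> v \<and> C = {u, v} \<and> count M {u, v} \<ge> 2) \<or>
     (\<exists>xs. distinct xs \<and> length xs \<ge> 3 \<and> set xs \<subseteq> V \<and> C = set xs \<and>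
        (\<forall>i < length xs. {xs ! i, xs ! ((i + 1) mod length xs)} \<in># M))"

text \<open>k is an admissible value of phi(s).\<close>
definition EP_bound :: "nat \<Rightarrow> nat \<Rightarrow> bool" where
  "EP_bound s k \<longleftrightarrow> (\<forall>V M. multigraph V M \<and>
     \<not> (\<exists>Cs. length Cs = s \<and> (\<forall>C\<in>set Cs. mg_cycle V M C) \<and>
          (\<forall>i < s. \<forall>j < s. i \<noteq> j \<longrightarrow> Cs ! i \<inter> Cs ! j = {}))
     \<longrightarrow> (\<exists>Y\<subseteq>V. card Y \<le> k \<and> (\<forall>C. mg_cycle V M C \<longrightarrow> C \<inter> Y \<noteq> {})))"

end

theory Submission
  imports Defs "HOL-Library.Transitive_Closure_Table"
begin


lemma mg_cycle_mono:
  assumes "mg_cycle V' M' C" "V' \<subseteq> V" "M' \<subseteq># M"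
  shows "mg_cycle V M C \<and> C \<subseteq> V'"
proof -
  have cnt: "count M' x \<le> count M x" for x using assms(3) by (simp add: subseteq_mset_def)
  have mem: "x \<in># M' \<Longrightarrow> x \<in># M" for x using assms(3) by (meson mset_subset_eqD)
  have "(\<exists>v\<in>V'. C = {v} \<and> {v} \<in># M') \<or>
     (\<exists>u\<in>V'. \<exists>v\<in>V'. u \<noteq> v \<and> C = {u, v} \<and> count M' {u, v} \<ge> 2) \<or>
     (\<exists>xs. distinct xs \<and> length xs \<ge> 3 \<and> set xs \<subseteq> V' \<and> C = set xs \<and>
        (\<forall>i < length xs. {xs ! i, xs ! ((i + 1) mod length xs)} \<in># M'))"
    using assms(1) unfolding mg_cycle_def .
  then show ?thesis
  proof (elim disjE)
    assume "\<exists>v\<in>V'. C = {v} \<and> {v} \<in># M'"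
    then obtain v where a: "v \<in> V'" "C = {v}" "{v} \<in># M'" by blast
    have "v \<in> V" "{v} \<in># M" using a assms(2) mem by auto
    then have "\<exists>v\<in>V. C = {v} \<and> {v} \<in># M" using a(2) by blast
    then have "mg_cycle V M C" unfolding mg_cycle_def by (rule disjI1)
    then show ?thesis using a by simp
  next
    assume "\<exists>u\<in>V'. \<exists>v\<in>V'. u \<noteq> v \<and> C = {u, v} \<and> count M' {u, v} \<ge> 2"
    then obtain u v where b: "u \<in> V'" "v \<in> V'" "u \<noteq> v" "C = {u, v}" "2 \<le> count M' {u, v}" by blast
    have "u \<in> V" "v \<in> V" using b assms(2) by auto
    moreover have "2 \<le> count M {u, v}" using b cnt[of "{u,v}"] by linarith
    ultimately have "\<exists>u\<in>V. \<exists>v\<in>V. u \<noteq> v \<and> C = {u, v} \<and> count M {u, v} \<ge> 2" using b by blast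
    then have "mg_cycle V M C" unfolding mg_cycle_def by (intro disjI2 disjI1)
    then show ?thesis using b by simp
  next
    assume "\<exists>xs. distinct xs \<and> length xs \<ge> 3 \<and> set xs \<subseteq> V' \<and> C = set xs \<and>
        (\<forall>i < length xs. {xs ! i, xs ! ((i + 1) mod length xs)} \<in># M')"
    then obtain xs where c: "distinct xs" "3 \<le> length xs" "set xs \<subseteq> V'" "C = set xs"
      "\<forall>i<length xs. {xs ! i, xs ! ((i + 1) mod length xs)} \<in># M'" by blast
    have "set xs \<subseteq> V" using c assms(2) by auto
    moreover have "\<forall>i<length xs. {xs ! i, xs ! ((i + 1) mod length xs)} \<in># M" using c mem by auto
    ultimately have "\<exists>xs. distinct xs \<and> length xs \<ge> 3 \<and> set xs \<subseteq> V \<and> C = set xs \<and>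
        (\<forall>i < length xs. {xs ! i, xs ! ((i + 1) mod length xs)} \<in># M)" using c by blast
    then have "mg_cycle V M C" unfolding mg_cycle_def by (intro disjI2)
    then show ?thesis using c by simp
  qed
qed

lemma size_single_set:
  assumes "set_mset A \<subseteq> {a}" shows "size A = count A a"
proof -
  have "A = replicate_mset (count A a) a"
  proof (rule multiset_eqI)
    fix x show "count A x = count (replicate_mset (count A a) a) x"
    proof (cases "x = a")
      case False
      then have "x \<notin># A" using assms by auto
      then show ?thesis using False by (simp add: not_in_iff)
    qed simp
  qed
  then show ?thesis by (metis size_replicate_mset)
qed

lemma mg_find_cycle:
  assumes mg: "multigraph V M" and ne: "V \<noteq> {}"
    and deg: "\<forall>v\<in>V. 2 \<le> size (filter_mset (\<lambda>e. v \<in> e) M)"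
  shows "\<exists>C. mg_cycle V M C"
proof (rule ccontr)
  assume nc: "\<not> (\<exists>C. mg_cycle V M C)"
  have fin: "finite V" using mg by (simp add: multigraph_def)
  have edge2: "\<exists>u w. e = {u, w} \<and> u \<noteq> w" if "e \<in># M" for e
  proof -
    have "e \<noteq> {}" "e \<subseteq> V" "card e \<le> 2" using mg that by (auto simp: multigraph_def)
    then have fe: "finite e" using fin finite_subset by blast
    have "card e \<noteq> 0" using fe \<open>e \<noteq> {}\<close> by simp
    moreover have "card e \<noteq> 1"
    proof
      assume "card e = 1"
      then obtain v where "e = {v}" by (auto simp: card_Suc_eq)
      then have "mg_cycle V M {v}" using that \<open>e \<subseteq> V\<close> unfolding mg_cycle_def by auto
      then show False using nc by blast
    qed
    ultimately have "card e = 2" using \<open>card e \<le> 2\<close> by linarith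
    then show ?thesis by (auto simp: card_Suc_eq numeral_2_eq_2)
  qed
  have other: "\<exists>w. {v, w} \<in># M \<and> w \<noteq> x" if "v \<in> V" for v x
  proof (rule ccontr)
    assume "\<not> ?thesis"
    then have allx: "\<And>w. {v, w} \<in># M \<Longrightarrow> w = x" by blast
    have sub: "set_mset (filter_mset (\<lambda>e. v \<in> e) M) \<subseteq> {{v, x}}"
    proof
      fix e assume "e \<in> set_mset (filter_mset (\<lambda>e. v \<in> e) M)"
      then have "e \<in># M" "v \<in> e" by auto
      then obtain u w where "e = {u, w}" "u \<noteq> w" using edge2 by blast
      then obtain w' where "e = {v, w'}" using \<open>v \<in> e\<close> by auto
      then show "e \<in> {{v, x}}" using allx \<open>e \<in># M\<close> by auto
    qed
    have "2 \<le> count (filter_mset (\<lambda>e. v \<in> e) M) {v, x}"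
      using deg that size_single_set[OF sub] by auto
    then have c2: "2 \<le> count M {v, x}" by simp
    have "{v, x} \<in># M" using c2 by (metis count_eq_zero_iff not_numeral_le_zero)
    then have xV: "x \<in> V" using mg by (auto simp: multigraph_def)
    show False
    proof (cases "v = x")
      case True
      then have "mg_cycle V M {v}" using c2 that unfolding mg_cycle_def
        by (metis count_inI insert_absorb2 not_numeral_le_zero)
      then show False using nc by blast
    next
      case False
      then have "mg_cycle V M {v, x}" using c2 that xV unfolding mg_cycle_def by blast
      then show False using nc by blast
    qed
  qed
  define PS where "PS = {xs. distinct xs \<and> set xs \<subseteq> V \<and> xs \<noteq> [] \<and>
     (\<forall>i. Suc i < length xs \<longrightarrow> {xs ! i, xs ! Suc i} \<in># M)}"
  have "PS \<subseteq> {xs. set xs \<subseteq> V \<and> length xs \<le> card V}"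
  proof
    fix xs assume "xs \<in> PS"
    then have "distinct xs" "set xs \<subseteq> V" unfolding PS_def by auto
    then have "length xs \<le> card V" using distinct_card[of xs] card_mono[OF fin] by metis
    then show "xs \<in> {xs. set xs \<subseteq> V \<and> length xs \<le> card V}" using \<open>set xs \<subseteq> V\<close> by simp
  qed
  then have finPS: "finite PS" using finite_lists_length_le[OF fin] finite_subset by blast
  obtain v0 where "v0 \<in> V" using ne by blast
  then have "[v0] \<in> PS" unfolding PS_def by auto
  then have "length ` PS \<noteq> {}" by blast
  define n where "n = Max (length ` PS)"
  have "n \<in> length ` PS" unfolding n_def using finPS \<open>length ` PS \<noteq> {}\<close> by (intro Max_in) auto
  then obtain xs where xs: "xs \<in> PS" "length xs = n" by blast
  have maxl: "length ys \<le> n" if "ys \<in> PS" for ys unfolding n_def using finPS that by simp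
  have xsd: "distinct xs" "set xs \<subseteq> V" "xs \<noteq> []"
    "\<And>i. Suc i < length xs \<Longrightarrow> {xs ! i, xs ! Suc i} \<in># M" using xs(1) unfolding PS_def by auto
  define v where "v = xs ! 0"
  have vV: "v \<in> V" using xsd v_def by (simp add: hd_conv_nth[symmetric] subset_iff)
  define x where "x = (if 2 \<le> length xs then xs ! 1 else v)"
  obtain w where w: "{v, w} \<in># M" "w \<noteq> x" using other[OF vV] by blast
  have wv: "w \<noteq> v"
  proof
    assume "w = v"
    then show False using edge2[OF w(1)] by auto
  qed
  have wV: "w \<in> V" using w(1) mg by (auto simp: multigraph_def)
  show False
  proof (cases "w \<in> set xs")
    case False
    have "w # xs \<in> PS" unfolding PS_def
    proof (intro CollectI conjI allI impI)
      fix i assume "Suc i < length (w # xs)"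
      then show "{(w # xs) ! i, (w # xs) ! Suc i} \<in># M"
        using xsd(4)[of "i - 1"] w(1) v_def by (cases i) (auto simp: insert_commute)
    qed (use False xsd wV in auto)
    then show False using maxl xs(2) by fastforce
  next
    case True
    then obtain j where j: "j < length xs" "xs ! j = w" by (auto simp: in_set_conv_nth)
    have "j \<noteq> 0" using j wv v_def by (metis)
    moreover have "j \<noteq> 1" using j w(2) x_def by auto
    ultimately have j2: "2 \<le> j" by linarith
    define ys where "ys = take (Suc j) xs"
    have ly: "length ys = Suc j" using j ys_def by simp
    have "mg_cycle V M (set ys)" unfolding mg_cycle_def
    proof (intro disjI2 exI conjI allI impI)
      show "distinct ys" using xsd ys_def by simp
      show "3 \<le> length ys" using ly j2 by simp
      show "set ys \<subseteq> V" using xsd ys_def by (meson set_take_subset subset_trans)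
      fix i assume i: "i < length ys"
      show "{ys ! i, ys ! ((i + 1) mod length ys)} \<in># M"
      proof (cases "i = j")
        case True
        then show ?thesis using ly w(1) j v_def ys_def by (simp add: insert_commute)
      next
        case False
        then have "i < j" using i ly by simp
        then show ?thesis using ly xsd(4)[of i] j ys_def by simp
      qed
    qed simp
    then show False using nc by blast
  qed
qed

lemma forest_bound:
  "finite V \<Longrightarrow> multigraph V M \<Longrightarrow> \<not> (\<exists>C. mg_cycle V M C) \<Longrightarrow> size M \<le> card V"
proof (induction "card V" arbitrary: V M rule: less_induct)
  case less
  show ?case
  proof (cases "V = {}")
    case True
    then have "M = {#}" using less.prems(2) unfolding multigraph_def by (metis multiset_nonemptyE subset_empty)
    then show ?thesis by simp
  next
    case ne: False
    show ?thesis
    proof (cases "\<exists>v\<in>V. size (filter_mset (\<lambda>e. v \<in> e) M) \<le> 1")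
      case True
      then obtain v where v: "v \<in> V" "size (filter_mset (\<lambda>e. v \<in> e) M) \<le> 1" by blast
      define M' where "M' = filter_mset (\<lambda>e. v \<notin> e) M"
      have mg': "multigraph (V - {v}) M'" using less.prems(2) unfolding multigraph_def M'_def by auto
      have nc': "\<not> (\<exists>C. mg_cycle (V - {v}) M' C)"
        using mg_cycle_mono[of "V - {v}" M' _ V M] less.prems(3) M'_def by auto
      have "size M' \<le> card (V - {v})"
        proof -
        have "card V > 0" using less.prems(1) v(1) card_gt_0_iff by blast
        then have "card (V - {v}) < card V" using v(1) less.prems(1) by simp
        then show ?thesis using less.hyps[of "V - {v}" M'] mg' nc' less.prems(1) by blast
      qed
      moreover have "size M = size M' + size (filter_mset (\<lambda>e. v \<in> e) M)"
        unfolding M'_def by (metis add.commute multiset_partition size_union)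
      moreover have "card V > 0" using less.prems(1) v(1) card_gt_0_iff by blast
      moreover have "card (V - {v}) = card V - 1" using v(1) less.prems(1) by simp
      ultimately show ?thesis using v(2) by linarith
    next
      case False
      then have "\<forall>v\<in>V. 2 \<le> size (filter_mset (\<lambda>e. v \<in> e) M)" by auto
      then show ?thesis using mg_find_cycle[OF less.prems(2) ne] less.prems(3) by blast
    qed
  qed
qed



lemma count_image_mset_set:
  assumes fin: "finite A"
  shows "count (image_mset f (mset_set A)) x = card {a\<in>A. f a = x}"
proof -
  have "count (image_mset f (mset_set A)) x = (\<Sum>y\<in>f -` {x} \<inter> A. count (mset_set A) y)"
    using fin by (simp add: count_image_mset)
  also have "\<dots> = (\<Sum>y\<in>f -` {x} \<inter> A. 1)" by (rule sum.cong) (use fin in auto)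
  also have "\<dots> = card (f -` {x} \<inter> A)" by simp
  also have "f -` {x} \<inter> A = {a\<in>A. f a = x}" by auto
  finally show ?thesis .
qed

lemma anticomplete_mono:
  "anticomplete E A B \<Longrightarrow> A' \<subseteq> A \<Longrightarrow> B' \<subseteq> B \<Longrightarrow> anticomplete E A' B'"
  unfolding anticomplete_def by blast

context
  fixes V :: "'a set" and E :: "'a set set" and Z :: "'a set" and S :: "'a list set" and s :: nat
  assumes mp: "monic_plantation s V E Z" and ns: "normal_set V E Z S"
begin

lemma finV: "finite V" using mp by (simp add: monic_plantation_def plantation_def graph_def)
lemma ZV: "Z \<subseteq> V" using mp by (simp add: monic_plantation_def plantation_def cycle_hitting_def)
lemma finZ: "finite Z" using finV ZV finite_subset by blast
lemma stab: "stable E Z" using mp by (simp add: monic_plantation_def)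
lemma edgeV: "e \<in> E \<Longrightarrow> e \<subseteq> V"
  using mp by (auto simp: monic_plantation_def plantation_def graph_def)
lemma uniq: "v \<in> attach V E Z \<Longrightarrow> card {z\<in>Z. {v, z} \<in> E} = 1"
  using mp by (simp add: monic_plantation_def)
lemma trS: "P \<in> S \<Longrightarrow> transition V E Z P" using ns by (simp add: normal_set_def)

lemma trS_path: assumes "P \<in> S"
  shows "distinct P" "set P \<subseteq> V - Z" "length P \<ge> 2"
    "\<And>i. Suc i < length P \<Longrightarrow> {P ! i, P ! Suc i} \<in> E"
    "hd P \<in> attach V E Z" "last P \<in> attach V E Z"
    "\<And>i. 0 < i \<Longrightarrow> i < length P - 1 \<Longrightarrow> P ! i \<notin> attach V E Z"
  using trS[OF assms] unfolding transition_def is_path_def by auto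

lemma finS: "finite S"
proof -
  have "S \<subseteq> {xs. set xs \<subseteq> V \<and> length xs \<le> card V}"
  proof
    fix P assume "P \<in> S"
    then have "distinct P" "set P \<subseteq> V" using trS_path by auto
    then have "length P \<le> card V" using distinct_card[of P] card_mono[OF finV] by metis
    then show "P \<in> {xs. set xs \<subseteq> V \<and> length xs \<le> card V}" using \<open>set P \<subseteq> V\<close> by simp
  qed
  then show ?thesis using finite_lists_length_le[OF finV] finite_subset by blast
qed

lemma feet_Z: "feet E Z P \<subseteq> Z" unfolding feet_def by auto

lemma end_adj:
  assumes "P \<in> S" "x \<in> set P" "z \<in> Z" "{x, z} \<in> E"
  shows "z \<in> feet E Z P"
proof -
  have "x \<in> V - Z" using assms trS_path(2) by blast
  then have xa: "x \<in> attach V E Z" using assms(3,4) unfolding attach_def by blast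
  obtain i where i: "i < length P" "P ! i = x" using assms(2) by (auto simp: in_set_conv_nth)
  have ne: "P \<noteq> []" using trS_path(3)[OF assms(1)] by auto
  have "x = hd P \<or> x = last P"
  proof (cases "i = 0")
    case True then show ?thesis using i ne by (simp add: hd_conv_nth)
  next
    case False
    show ?thesis
    proof (cases "i = length P - 1")
      case True then show ?thesis using i ne by (simp add: last_conv_nth)
    next
      case False2: False
      then have "i < length P - 1" using i by linarith
      then show ?thesis using trS_path(7)[OF assms(1), of i] False xa i by simp
    qed
  qed
  then have "x \<in> path_ends P" unfolding path_ends_def by auto
  then show ?thesis unfolding feet_def using assms(3,4) by blast
qed

lemma attach_foot: "v \<in> attach V E Z \<Longrightarrow> \<exists>z\<in>Z. {v, z} \<in> E"
  unfolding attach_def by blast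

lemma feet_hd: "P \<in> S \<Longrightarrow> \<exists>z\<in>feet E Z P. {hd P, z} \<in> E"
  using attach_foot[OF trS_path(5)] unfolding feet_def path_ends_def by blast

lemma feet_last: "P \<in> S \<Longrightarrow> \<exists>z\<in>feet E Z P. {last P, z} \<in> E"
  using attach_foot[OF trS_path(6)] unfolding feet_def path_ends_def by blast

lemma feet_elem: "z \<in> feet E Z P \<Longrightarrow> z \<in> Z \<and> ({hd P, z} \<in> E \<or> {last P, z} \<in> E)"
  unfolding feet_def path_ends_def by blast

lemma feet_card: assumes "P \<in> S" shows "card (feet E Z P) \<le> 2" "finite (feet E Z P)"
proof -
  have eq: "feet E Z P = {z\<in>Z. {hd P, z} \<in> E} \<union> {z\<in>Z. {last P, z} \<in> E}"
    unfolding feet_def path_ends_def by blast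
  have "card {z\<in>Z. {hd P, z} \<in> E} = 1" using uniq[OF trS_path(5)[OF assms]] .
  moreover have "card {z\<in>Z. {last P, z} \<in> E} = 1" using uniq[OF trS_path(6)[OF assms]] .
  moreover have "card (feet E Z P) \<le> card {z\<in>Z. {hd P, z} \<in> E} + card {z\<in>Z. {last P, z} \<in> E}"
    unfolding eq by (rule card_Un_le)
  ultimately show "card (feet E Z P) \<le> 2" by simp
  show "finite (feet E Z P)" using finZ feet_Z finite_subset by blast
qed

lemma shared_end:
  assumes "P \<in> S" "Q \<in> S" "path_ends P \<inter> path_ends Q \<noteq> {}"
  shows "feet E Z P \<inter> feet E Z Q \<noteq> {}"
proof -
  obtain y where y: "y \<in> path_ends P" "y \<in> path_ends Q" using assms(3) by blast
  have "y \<in> attach V E Z" using y(1) trS_path(5,6)[OF assms(1)] unfolding path_ends_def by auto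
  then obtain z where "z \<in> Z" "{y, z} \<in> E" using attach_foot by blast
  then have "z \<in> feet E Z P" "z \<in> feet E Z Q" unfolding feet_def using y by blast+
  then show ?thesis by blast
qed

definition WW :: "'a set \<Rightarrow> 'a set" where
  "WW C' = C' \<union> (\<Union>Q\<in>{Q\<in>S. feet E Z Q \<subseteq> C'}. set Q)"

lemma WW_V: "C' \<subseteq> Z \<Longrightarrow> WW C' \<subseteq> V"
  unfolding WW_def using ZV trS_path(2) by blast

lemma anti_PQ:
  assumes "P \<in> S" "Q \<in> S" "feet E Z P \<subseteq> C'" "feet E Z Q \<subseteq> D'" "C' \<inter> D' = {}"
  shows "anticomplete E (set P) (set Q)"
proof -
  obtain z where "z \<in> feet E Z P" using feet_hd[OF assms(1)] by blast
  then have "P \<noteq> Q" using assms(3-5) by blast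
  have "feet E Z P \<inter> feet E Z Q = {}" using assms(3-5) by blast
  then have "path_ends P \<inter> path_ends Q = {}" using shared_end assms(1,2) by blast
  then show ?thesis using ns \<open>P \<noteq> Q\<close> assms(1,2) unfolding normal_set_def by blast
qed

lemma anti_W:
  assumes "C' \<subseteq> Z" "D' \<subseteq> Z" "C' \<inter> D' = {}"
  shows "anticomplete E (WW C') (WW D')"
  unfolding anticomplete_def
proof (intro conjI ballI)
  show "WW C' \<inter> WW D' = {}"
  proof (rule ccontr)
    assume "WW C' \<inter> WW D' \<noteq> {}"
    then obtain x where x: "x \<in> WW C'" "x \<in> WW D'" by blast
    show False
    proof (cases "x \<in> Z")
      case True
      then have "x \<in> C'" "x \<in> D'" using x trS_path(2) unfolding WW_def by blast+
      then show False using assms(3) by blast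
    next
      case False
      then obtain P Q where "P \<in> S" "feet E Z P \<subseteq> C'" "x \<in> set P"
        "Q \<in> S" "feet E Z Q \<subseteq> D'" "x \<in> set Q"
        using x assms(1,2) unfolding WW_def by blast
      then show False using anti_PQ[of P Q C' D'] assms(3) unfolding anticomplete_def by blast
    qed
  qed
next
  fix a b assume a: "a \<in> WW C'" and b: "b \<in> WW D'"
  show "{a, b} \<notin> E"
  proof
    assume ab: "{a, b} \<in> E"
    show False
    proof (cases "a \<in> Z")
      case aZ: True
      then have aC: "a \<in> C'" using a trS_path(2) unfolding WW_def by blast
      show False
      proof (cases "b \<in> Z")
        case True
        then have "b \<in> D'" using b trS_path(2) unfolding WW_def by blast
        then show False using stab aC ab assms unfolding stable_def by blast
      next
        case False
        then obtain Q where "Q \<in> S" "feet E Z Q \<subseteq> D'" "b \<in> set Q"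
          using b assms(2) unfolding WW_def by blast
        then have "a \<in> feet E Z Q" using end_adj[of Q b a] aZ ab by (simp add: insert_commute)
        then show False using \<open>feet E Z Q \<subseteq> D'\<close> aC assms(3) by blast
      qed
    next
      case aZ: False
      then obtain P where P: "P \<in> S" "feet E Z P \<subseteq> C'" "a \<in> set P"
        using a assms(1) unfolding WW_def by blast
      show False
      proof (cases "b \<in> Z")
        case True
        then have "b \<in> D'" using b trS_path(2) unfolding WW_def by blast
        have "b \<in> feet E Z P" using end_adj[of P a b] P True ab by simp
        then show False using P \<open>b \<in> D'\<close> assms(3) by blast
      next
        case False
        then obtain Q where "Q \<in> S" "feet E Z Q \<subseteq> D'" "b \<in> set Q"
          using b assms(2) unfolding WW_def by blast
        then show False using anti_PQ[of P Q C' D'] P assms(3) ab unfolding anticomplete_def by blast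
      qed
    qed
  qed
qed

definition Lk :: "'a set \<Rightarrow> 'a list \<Rightarrow> 'a \<Rightarrow> 'a \<Rightarrow> bool" where
  "Lk C' P1 z1 z2 = (\<exists>Q\<in>S. Q \<noteq> P1 \<and> feet E Z Q \<subseteq> C' \<and> z1 \<in> feet E Z Q \<and> z2 \<in> feet E Z Q)"

definition RR :: "'a set \<Rightarrow> 'a set \<Rightarrow> 'a \<Rightarrow> 'a \<Rightarrow> bool" where
  "RR C' e x y = (x \<in> WW C' \<and> y \<in> WW C' \<and> {x, y} \<in> E \<and> {x, y} \<noteq> e)"

lemma RR_sym: "RR C' e x y \<Longrightarrow> RR C' e y x"
  unfolding RR_def by (simp add: insert_commute)

lemma RRs_sym: "(RR C' e)\<^sup>*\<^sup>* x y \<Longrightarrow> (RR C' e)\<^sup>*\<^sup>* y x"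
proof (induction rule: rtranclp.induct)
  case (rtrancl_refl a) then show ?case by simp
next
  case (rtrancl_into_rtrancl a b c)
  then show ?case using RR_sym converse_rtranclp_into_rtranclp by metis
qed

lemma chain:
  assumes "set P \<subseteq> WW C'" "\<forall>k. Suc k < length P \<longrightarrow> {P ! k, P ! Suc k} \<in> E"
    "\<forall>k. i \<le> k \<longrightarrow> Suc k \<le> j \<longrightarrow> {P ! k, P ! Suc k} \<noteq> e" "i \<le> j" "j < length P"
  shows "(RR C' e)\<^sup>*\<^sup>* (P ! i) (P ! j)"
  using assms(3,4,5)
proof (induction j)
  case 0 then show ?case by simp
next
  case (Suc j)
  show ?case
  proof (cases "i = Suc j")
    case True then show ?thesis by simp
  next
    case False
    then have ij: "i \<le> j" using Suc.prems by simp
    have pj: "\<forall>k. i \<le> k \<longrightarrow> Suc k \<le> j \<longrightarrow> {P ! k, P ! Suc k} \<noteq> e" using Suc.prems(1) by simp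
    have IH: "(RR C' e)\<^sup>*\<^sup>* (P ! i) (P ! j)" using Suc.IH[OF pj ij] Suc.prems by simp
    have "P ! j \<in> WW C'" "P ! Suc j \<in> WW C'" using assms(1) Suc.prems nth_mem
      by (metis Suc_lessD subsetD)+
    moreover have "{P ! j, P ! Suc j} \<in> E" using assms(2) Suc.prems by simp
    moreover have "{P ! j, P ! Suc j} \<noteq> e" using Suc.prems(1) ij by simp
    ultimately have "RR C' e (P ! j) (P ! Suc j)" unfolding RR_def by simp
    then show ?thesis by (rule rtranclp.rtrancl_into_rtrancl[OF IH])
  qed
qed

lemma path_edge_in: "Suc k < length P \<Longrightarrow> {P ! k, P ! Suc k} \<in> path_edges P"
  unfolding path_edges_def by blast

lemma Lk_RR:
  assumes eZ: "e \<inter> Z = {}" and priv: "\<forall>Q\<in>S. Q \<noteq> P1 \<longrightarrow> e \<notin> path_edges Q"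
    and lk: "Lk C' P1 z1 z2"
  shows "(RR C' e)\<^sup>*\<^sup>* z1 z2"
proof -
  obtain Q where Q: "Q \<in> S" "Q \<noteq> P1" "feet E Z Q \<subseteq> C'" "z1 \<in> feet E Z Q" "z2 \<in> feet E Z Q"
    using lk unfolding Lk_def by blast
  have QW: "set Q \<subseteq> WW C'" unfolding WW_def using Q by blast
  have CW: "C' \<subseteq> WW C'" unfolding WW_def by blast
  have lenQ: "length Q \<ge> 2" using trS_path(3)[OF Q(1)] .
  then have Qne: "Q \<noteq> []" by auto
  have "(RR C' e)\<^sup>*\<^sup>* (Q ! 0) (Q ! (length Q - 1))"
  proof (rule chain[OF QW])
    show "\<forall>k. Suc k < length Q \<longrightarrow> {Q ! k, Q ! Suc k} \<in> E" using trS_path(4)[OF Q(1)] by blast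
    show "\<forall>k. 0 \<le> k \<longrightarrow> Suc k \<le> length Q - 1 \<longrightarrow> {Q ! k, Q ! Suc k} \<noteq> e"
    proof (intro allI impI)
      fix k assume "0 \<le> k" "Suc k \<le> length Q - 1"
      then have "Suc k < length Q" using lenQ by linarith
      then show "{Q ! k, Q ! Suc k} \<noteq> e" using path_edge_in priv Q(1,2) by metis
    qed
  qed (use lenQ in auto)
  then have hl: "(RR C' e)\<^sup>*\<^sup>* (hd Q) (last Q)" using Qne by (simp add: hd_conv_nth last_conv_nth)
  have to_hd: "(RR C' e)\<^sup>*\<^sup>* z (hd Q)" if z: "z \<in> feet E Z Q" for z
  proof -
    have zZ: "z \<in> Z" and ed: "{hd Q, z} \<in> E \<or> {last Q, z} \<in> E" using feet_elem[OF z] by auto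
    have zW: "z \<in> WW C'" using z Q(3) CW by blast
    have "hd Q \<in> WW C'" "last Q \<in> WW C'" using QW Qne by auto
    moreover have "{z, x} \<noteq> e \<and> {x, z} \<noteq> e" for x using eZ zZ by blast
    ultimately show ?thesis
    proof -
      assume hw: "hd Q \<in> WW C'" "last Q \<in> WW C'" and ne: "\<And>x. {z, x} \<noteq> e \<and> {x, z} \<noteq> e"
      from ed show ?thesis
      proof
        assume "{hd Q, z} \<in> E"
        then have "RR C' e z (hd Q)" unfolding RR_def using zW hw ne by (simp only: insert_commute[of z]) simp
        then show ?thesis by simp
      next
        assume "{last Q, z} \<in> E"
        then have "RR C' e z (last Q)" unfolding RR_def using zW hw ne by (simp only: insert_commute[of z]) simp
        then show ?thesis using RRs_sym[OF hl] by (rule converse_rtranclp_into_rtranclp)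
      qed
    qed
  qed
  show ?thesis using to_hd[OF Q(4)] RRs_sym[OF to_hd[OF Q(5)]] by (rule rtranclp_trans)
qed

lemma cyc_W:
  assumes C'Z: "C' \<subseteq> Z" and P1: "P1 \<in> S" and fP1: "feet E Z P1 \<subseteq> C'"
    and conn: "\<forall>z1\<in>feet E Z P1. \<forall>z2\<in>feet E Z P1. (Lk C' P1)\<^sup>*\<^sup>* z1 z2"
  shows "\<exists>cyc. is_cycle V E cyc \<and> set cyc \<subseteq> WW C'"
proof -
  obtain e where e: "e \<in> path_edges P1" "\<forall>Q\<in>S. Q \<noteq> P1 \<longrightarrow> e \<notin> path_edges Q"
    using ns P1 unfolding normal_set_def by blast
  obtain i where i: "Suc i < length P1" "e = {P1 ! i, P1 ! Suc i}" using e(1) unfolding path_edges_def by blast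
  define a where "a = P1 ! i"
  define b where "b = P1 ! Suc i"
  have dP: "distinct P1" and sP: "set P1 \<subseteq> V - Z" and lP: "length P1 \<ge> 2"
    and edP: "\<forall>k. Suc k < length P1 \<longrightarrow> {P1 ! k, P1 ! Suc k} \<in> E"
    using trS_path[OF P1] by auto
  have Pne: "P1 \<noteq> []" using lP by auto
  have ab: "a \<noteq> b" unfolding a_def b_def using dP i(1) by (simp add: nth_eq_iff_index_eq)
  have eab: "e = {a, b}" using i a_def b_def by simp
  have aP: "a \<in> set P1" "b \<in> set P1" unfolding a_def b_def using i(1) by auto
  have eZ: "e \<inter> Z = {}" using aP sP eab by blast
  have eE: "e \<in> E" using edP i by simp
  have PW: "set P1 \<subseteq> WW C'" unfolding WW_def using P1 fP1 by blast
  have CW: "C' \<subseteq> WW C'" unfolding WW_def by blast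
  have uq: "k = i" if k: "Suc k < length P1" "{P1 ! k, P1 ! Suc k} = e" for k
  proof -
    have "P1 ! k = P1 ! i \<or> P1 ! k = P1 ! Suc i" using k(2) i(2) by blast
    moreover have "P1 ! Suc k = P1 ! i \<or> P1 ! Suc k = P1 ! Suc i" using k(2) i(2) by blast
    ultimately show ?thesis using dP k(1) i(1) by (auto simp: nth_eq_iff_index_eq)
  qed
  have a_hd: "(RR C' e)\<^sup>*\<^sup>* (P1 ! 0) (P1 ! i)"
  proof (rule chain[OF PW])
    show "\<forall>k. Suc k < length P1 \<longrightarrow> {P1 ! k, P1 ! Suc k} \<in> E" by (rule edP)
    show "\<forall>k. 0 \<le> k \<longrightarrow> Suc k \<le> i \<longrightarrow> {P1 ! k, P1 ! Suc k} \<noteq> e"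
    proof (intro allI impI)
      fix k assume "0 \<le> k" "Suc k \<le> i"
      then have "Suc k < length P1" "k \<noteq> i" using i(1) by auto
      then show "{P1 ! k, P1 ! Suc k} \<noteq> e" using uq by blast
    qed
  qed (use i(1) in simp_all)
  have b_last: "(RR C' e)\<^sup>*\<^sup>* (P1 ! Suc i) (P1 ! (length P1 - 1))"
  proof (rule chain[OF PW])
    show "\<forall>k. Suc k < length P1 \<longrightarrow> {P1 ! k, P1 ! Suc k} \<in> E" by (rule edP)
    show "\<forall>k. Suc i \<le> k \<longrightarrow> Suc k \<le> length P1 - 1 \<longrightarrow> {P1 ! k, P1 ! Suc k} \<noteq> e"
    proof (intro allI impI)
      fix k assume "Suc i \<le> k" "Suc k \<le> length P1 - 1"
      then have "Suc k < length P1" "k \<noteq> i" using i(1) by auto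
      then show "{P1 ! k, P1 ! Suc k} \<noteq> e" using uq by blast
    qed
  qed (use i(1) in simp_all)
  obtain zh where zh: "zh \<in> feet E Z P1" "{hd P1, zh} \<in> E" using feet_hd[OF P1] by blast
  obtain zl where zl: "zl \<in> feet E Z P1" "{last P1, zl} \<in> E" using feet_last[OF P1] by blast
  have zhZ: "zh \<in> Z" "zl \<in> Z" using zh zl feet_Z by blast+
  have hdW: "hd P1 \<in> WW C'" "last P1 \<in> WW C'" using PW Pne by auto
  have zW: "zh \<in> WW C'" "zl \<in> WW C'" using zh zl fP1 CW by blast+
  have "{hd P1, zh} \<noteq> e" using zhZ(1) eZ by blast
  then have r1: "RR C' e (hd P1) zh" unfolding RR_def using zh(2) hdW zW by simp
  have "{last P1, zl} \<noteq> e" using zhZ(2) eZ by blast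
  then have r2: "RR C' e (last P1) zl" unfolding RR_def using zl(2) hdW zW by simp
  have "(Lk C' P1)\<^sup>*\<^sup>* zh zl" using conn zh zl by blast
  then have r3: "(RR C' e)\<^sup>*\<^sup>* zh zl"
  proof (induction rule: rtranclp_induct)
    case base then show ?case by simp
  next
    case (step y z)
    have "(RR C' e)\<^sup>*\<^sup>* y z" using Lk_RR[OF eZ e(2) step(2)] .
    then show ?case by (rule rtranclp_trans[OF step(3)])
  qed
  have "(RR C' e)\<^sup>*\<^sup>* a (hd P1)" using RRs_sym[OF a_hd] Pne by (simp add: a_def hd_conv_nth)
  also have "(RR C' e)\<^sup>*\<^sup>* (hd P1) zh" using r1 by simp
  also have "(RR C' e)\<^sup>*\<^sup>* zh zl" by (rule r3)
  also have "(RR C' e)\<^sup>*\<^sup>* zl (last P1)" using RR_sym[OF r2] by simp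
  also have "(RR C' e)\<^sup>*\<^sup>* (last P1) b" using RRs_sym[OF b_last] Pne by (simp add: b_def last_conv_nth)
  finally have "(RR C' e)\<^sup>*\<^sup>* a b" .
  then obtain xs where "rtrancl_path (RR C' e) a xs b" by (auto simp: rtranclp_eq_rtrancl_path)
  then obtain ys where ys: "rtrancl_path (RR C' e) a ys b" "distinct (a # ys)"
    by (rule rtrancl_path_distinct)
  have yne: "ys \<noteq> []" using ys(1) ab by (auto elim: rtrancl_path.cases)
  have ylast: "last ys = b" using rtrancl_path_last[OF ys(1) yne] .
  have ylen: "length ys \<ge> 2"
  proof (rule ccontr)
    assume "\<not> length ys \<ge> 2"
    then have "length ys = 1" using yne by (cases ys) (auto simp: Suc_le_eq)
    then obtain y where "ys = [y]" by (cases ys) auto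
    then have "y = b" using ylast by simp
    have "RR C' e ((a # ys) ! 0) (ys ! 0)" using rtrancl_path_nth[OF ys(1), of 0] yne by simp
    then have "RR C' e a b" using \<open>ys = [y]\<close> \<open>y = b\<close> by simp
    then show False unfolding RR_def using eab by simp
  qed
  have aW: "a \<in> WW C'" using aP PW by blast
  have ysW: "set ys \<subseteq> WW C'"
  proof
    fix y assume "y \<in> set ys"
    then have "Rangep (RR C' e) y" using rtrancl_path_Range[OF ys(1)] by blast
    then show "y \<in> WW C'" unfolding RR_def by blast
  qed
  define cyc where "cyc = a # ys"
  have "is_cycle V E cyc" unfolding is_cycle_def
  proof (intro conjI allI impI)
    show "distinct cyc" using ys(2) cyc_def by simp
    show "3 \<le> length cyc" using ylen cyc_def by simp
    show "set cyc \<subseteq> V" using aW ysW WW_V[OF C'Z] cyc_def by auto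
    fix n assume n: "n < length cyc"
    show "{cyc ! n, cyc ! ((n + 1) mod length cyc)} \<in> E"
    proof (cases "n + 1 < length cyc")
      case True
      then have "n < length ys" using cyc_def by simp
      then have "RR C' e ((a # ys) ! n) (ys ! n)" by (rule rtrancl_path_nth[OF ys(1)])
      then show ?thesis using True cyc_def unfolding RR_def by simp
    next
      case False
      then have nl: "n = length ys" using n cyc_def by simp
      then have "cyc ! n = b" using cyc_def ylast yne by (simp add: last_conv_nth)
      moreover have "(n + 1) mod length cyc = 0" using nl cyc_def by simp
      ultimately show ?thesis using eE eab cyc_def by (simp add: insert_commute)
    qed
  qed
  moreover have "set cyc \<subseteq> WW C'" using aW ysW cyc_def by simp
  ultimately show ?thesis by blast
qed

lemma Lk_sym: "Lk C' P1 x y \<Longrightarrow> Lk C' P1 y x"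
  unfolding Lk_def by blast

lemma Lks_sym: "(Lk C' P1)\<^sup>*\<^sup>* x y \<Longrightarrow> (Lk C' P1)\<^sup>*\<^sup>* y x"
proof (induction rule: rtranclp.induct)
  case (rtrancl_refl a) then show ?case by simp
next
  case (rtrancl_into_rtrancl a b c)
  then show ?case using Lk_sym converse_rtranclp_into_rtranclp by metis
qed

lemma main_ctx:
  assumes EP: "EP_bound s phi"
  shows "\<exists>X\<subseteq>Z. card X \<le> phi \<and> card {P\<in>S. feet E Z P \<inter> X = {}} \<le> card Z"
proof -
  obtain h where h: "bij_betw h Z {0..<card Z}" using ex_bij_betw_finite_nat[OF finZ] by blast
  have hinj: "inj_on h Z" using h by (simp add: bij_betw_def)
  define VH where "VH = h ` Z"
  have finVH: "finite VH" unfolding VH_def using finZ by simp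
  define f where "f P = h ` feet E Z P" for P
  define M where "M = image_mset f (mset_set S)"
  have memM: "e \<in># M \<longleftrightarrow> (\<exists>P\<in>S. f P = e)" for e using finS by (auto simp: M_def)
  have f_inv: "feet E Z P = {z\<in>Z. h z \<in> f P}" for P
  proof
    show "feet E Z P \<subseteq> {z\<in>Z. h z \<in> f P}" using feet_Z unfolding f_def by blast
    show "{z\<in>Z. h z \<in> f P} \<subseteq> feet E Z P"
    proof
      fix z assume "z \<in> {z\<in>Z. h z \<in> f P}"
      then obtain z' where "z \<in> Z" "z' \<in> feet E Z P" "h z = h z'" unfolding f_def by blast
      then have "z = z'" using hinj feet_Z inj_on_eq_iff by (metis subsetD)
      then show "z \<in> feet E Z P" using \<open>z' \<in> feet E Z P\<close> by simp
    qed
  qed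
  have fVH: "f P \<subseteq> VH" for P unfolding f_def VH_def using feet_Z by blast
  have mgH: "multigraph VH M" unfolding multigraph_def
  proof (intro conjI ballI)
    show "finite VH" by (rule finVH)
    fix e assume "e \<in># M"
    then obtain P where P: "P \<in> S" "f P = e" using memM by blast
    show "e \<noteq> {}" using feet_hd[OF P(1)] P(2) unfolding f_def by blast
    show "e \<subseteq> VH" using fVH P(2) by blast
    have "card (f P) \<le> card (feet E Z P)" unfolding f_def by (rule card_image_le[OF feet_card(2)[OF P(1)]])
    then show "card e \<le> 2" using feet_card(1)[OF P(1)] P(2) by simp
  qed
  define g where "g = inv_into Z h"
  have gZ: "y \<in> VH \<Longrightarrow> g y \<in> Z \<and> h (g y) = y" for y
    unfolding g_def VH_def by (simp add: inv_into_into f_inv_into_f)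
  have gh: "z \<in> Z \<Longrightarrow> g (h z) = z" for z unfolding g_def using hinj by simp
  have key: "\<exists>cyc. is_cycle V E cyc \<and> set cyc \<subseteq> WW {z\<in>Z. h z \<in> C}" if mc: "mg_cycle VH M C" for C
  proof -
    define C' where "C' = {z\<in>Z. h z \<in> C}"
    have C'Z: "C' \<subseteq> Z" unfolding C'_def by blast
    have sub: "feet E Z P \<subseteq> C'" if "f P \<subseteq> C" for P using that f_inv[of P] unfolding C'_def by blast
    have "(\<exists>v\<in>VH. C = {v} \<and> {v} \<in># M) \<or>
     (\<exists>u\<in>VH. \<exists>v\<in>VH. u \<noteq> v \<and> C = {u, v} \<and> count M {u, v} \<ge> 2) \<or>
     (\<exists>xs. distinct xs \<and> length xs \<ge> 3 \<and> set xs \<subseteq> VH \<and> C = set xs \<and>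
        (\<forall>i < length xs. {xs ! i, xs ! ((i + 1) mod length xs)} \<in># M))"
      using mc unfolding mg_cycle_def .
    then have "\<exists>P1. P1 \<in> S \<and> feet E Z P1 \<subseteq> C' \<and>
       (\<forall>z1\<in>feet E Z P1. \<forall>z2\<in>feet E Z P1. (Lk C' P1)\<^sup>*\<^sup>* z1 z2)"
    proof (elim disjE)
      assume "\<exists>v\<in>VH. C = {v} \<and> {v} \<in># M"
      then obtain v P1 where v: "C = {v}" "P1 \<in> S" "f P1 = {v}" using memM by blast
      have "feet E Z P1 \<subseteq> C'" using sub v by simp
      moreover have "\<forall>z1\<in>feet E Z P1. \<forall>z2\<in>feet E Z P1. (Lk C' P1)\<^sup>*\<^sup>* z1 z2"
      proof (intro ballI)
        fix z1 z2 assume z: "z1 \<in> feet E Z P1" "z2 \<in> feet E Z P1"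
        then have "h z1 = v" "h z2 = v" "z1 \<in> Z" "z2 \<in> Z" using f_inv[of P1] v(3) by auto
        then have "z1 = z2" using gh by metis
        then show "(Lk C' P1)\<^sup>*\<^sup>* z1 z2" by simp
      qed
      ultimately show ?thesis using v(2) by blast
    next
      assume "\<exists>u\<in>VH. \<exists>v\<in>VH. u \<noteq> v \<and> C = {u, v} \<and> count M {u, v} \<ge> 2"
      then obtain u v where uv: "C = {u, v}" "count M {u, v} \<ge> 2" by blast
      define T where "T = {P\<in>S. f P = {u, v}}"
      have "card T \<ge> 2" using uv(2) count_image_mset_set[OF finS, of f "{u,v}"] unfolding M_def T_def by simp
      then obtain P1 where P1: "P1 \<in> T" by fastforce
      have finT: "finite T" unfolding T_def using finS by simp
      have "card (T - {P1}) \<ge> 1" using \<open>card T \<ge> 2\<close> P1 finT by simp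
      then have "T - {P1} \<noteq> {}" by (metis card.empty not_one_le_zero)
      then obtain Q where Q: "Q \<in> T" "Q \<noteq> P1" by blast
      have fe: "feet E Z Q = feet E Z P1" using f_inv[of Q] f_inv[of P1] Q(1) P1 unfolding T_def by simp
      have fs: "feet E Z P1 \<subseteq> C'" using sub P1 uv(1) unfolding T_def by simp
      have "\<forall>z1\<in>feet E Z P1. \<forall>z2\<in>feet E Z P1. (Lk C' P1)\<^sup>*\<^sup>* z1 z2"
      proof (intro ballI)
        fix z1 z2 assume z: "z1 \<in> feet E Z P1" "z2 \<in> feet E Z P1"
        have "Q \<in> S" using Q(1) unfolding T_def by simp
        then have "Lk C' P1 z1 z2" unfolding Lk_def using Q(2) fe fs z by auto
        then show "(Lk C' P1)\<^sup>*\<^sup>* z1 z2" by simp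
      qed
      then show ?thesis using P1 fs unfolding T_def by blast
    next
      assume "\<exists>xs. distinct xs \<and> length xs \<ge> 3 \<and> set xs \<subseteq> VH \<and> C = set xs \<and>
        (\<forall>i < length xs. {xs ! i, xs ! ((i + 1) mod length xs)} \<in># M)"
      then obtain xs where xs: "distinct xs" "length xs \<ge> 3" "set xs \<subseteq> VH" "C = set xs"
        "\<forall>i < length xs. {xs ! i, xs ! ((i + 1) mod length xs)} \<in># M" by blast
      define k where "k = length xs"
      have k3: "k \<ge> 3" using xs(2) k_def by simp
      have "\<forall>j. \<exists>Q. j < k \<longrightarrow> Q \<in> S \<and> f Q = {xs ! j, xs ! ((j + 1) mod k)}"
        using xs(5) memM k_def by metis
      then obtain QQ where QQ: "\<And>j. j < k \<Longrightarrow> QQ j \<in> S \<and> f (QQ j) = {xs ! j, xs ! ((j + 1) mod k)}"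
        by metis
      define P1 where "P1 = QQ 0"
      have P1: "P1 \<in> S" "f P1 = {xs ! 0, xs ! 1}" using QQ[of 0] k3 P1_def by auto
      have xsC: "xs ! j \<in> C" if "j < k" for j using that xs(4) k_def by simp
      have QQsub: "feet E Z (QQ j) \<subseteq> C'" if "j < k" for j
      proof -
        have "(j + 1) mod k < k" using k3 by simp
        then have "f (QQ j) \<subseteq> C" using QQ[OF that] xsC that by auto
        then show ?thesis by (rule sub)
      qed
      have gfeet: "g (xs ! j) \<in> feet E Z (QQ i)" if "j < k" "xs ! j \<in> f (QQ i)" for i j
      proof -
        have "xs ! j \<in> VH" using that(1) xs(3) k_def by auto
        then show ?thesis using gZ that(2) f_inv[of "QQ i"] by auto
      qed
      have QQne: "QQ j \<noteq> P1" if "1 \<le> j" "j < k" for j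
      proof
        assume eq: "QQ j = P1"
        then have "{xs ! j, xs ! ((j + 1) mod k)} = {xs ! 0, xs ! 1}" using QQ[OF that(2)] P1(2) by simp
        then have "xs ! j = xs ! 0 \<or> xs ! j = xs ! 1" by blast
        moreover have jl: "j < length xs" "0 < length xs" "1 < length xs" "2 < length xs" using that k3 k_def by auto
        ultimately have "j = 0 \<or> j = 1"
          using nth_eq_iff_index_eq[OF xs(1) jl(1) jl(2)] nth_eq_iff_index_eq[OF xs(1) jl(1) jl(3)] by blast
        then have "j = 1" using that by simp
        then have m2: "(j + 1) mod k = 2" using k3 by simp
        have "xs ! ((j + 1) mod k) \<in> {xs ! 0, xs ! 1}"
          using \<open>{xs ! j, xs ! ((j + 1) mod k)} = {xs ! 0, xs ! 1}\<close> by blast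
        then have "xs ! 2 \<in> {xs ! 0, xs ! 1}" by (simp only: m2)
        then have "xs ! 2 = xs ! 0 \<or> xs ! 2 = xs ! 1" by blast
        then show False
          using nth_eq_iff_index_eq[OF xs(1) jl(4) jl(2)] nth_eq_iff_index_eq[OF xs(1) jl(4) jl(3)] by simp
      qed
      have step: "Lk C' P1 (g (xs ! j)) (g (xs ! ((j + 1) mod k)))" if "1 \<le> j" "j < k" for j
      proof -
        have m: "(j + 1) mod k < k" using k3 by simp
        have "g (xs ! j) \<in> feet E Z (QQ j)" using gfeet[OF that(2)] QQ[OF that(2)] by simp
        moreover have "g (xs ! ((j + 1) mod k)) \<in> feet E Z (QQ j)" using gfeet[OF m] QQ[OF that(2)] by simp
        ultimately show ?thesis unfolding Lk_def using QQ[OF that(2)] QQne[OF that] QQsub[OF that(2)] by blast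
      qed
      have ch: "(Lk C' P1)\<^sup>*\<^sup>* (g (xs ! 1)) (g (xs ! j))" if "1 \<le> j" "j < k" for j
        using that
      proof (induction j)
        case 0 then show ?case by simp
      next
        case (Suc j)
        show ?case
        proof (cases "j = 0")
          case True then show ?thesis by simp
        next
          case False
          then have "(Lk C' P1)\<^sup>*\<^sup>* (g (xs ! 1)) (g (xs ! j))" using Suc by simp
          moreover have "Lk C' P1 (g (xs ! j)) (g (xs ! Suc j))"
            using step[of j] False Suc.prems by simp
          ultimately show ?thesis by (rule rtranclp.rtrancl_into_rtrancl)
        qed
      qed
      have "(Lk C' P1)\<^sup>*\<^sup>* (g (xs ! 1)) (g (xs ! (k - 1)))" using ch[of "k - 1"] k3 by simp
      moreover have "Lk C' P1 (g (xs ! (k - 1))) (g (xs ! 0))"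
        using step[of "k - 1"] k3 by simp
      ultimately have c10: "(Lk C' P1)\<^sup>*\<^sup>* (g (xs ! 1)) (g (xs ! 0))" by (rule rtranclp.rtrancl_into_rtrancl)
      have fP1: "feet E Z P1 \<subseteq> {g (xs ! 0), g (xs ! 1)}"
      proof
        fix z assume "z \<in> feet E Z P1"
        then have "z \<in> Z" "h z \<in> {xs ! 0, xs ! 1}" using f_inv[of P1] P1(2) by auto
        then show "z \<in> {g (xs ! 0), g (xs ! 1)}" using gh by force
      qed
      have fs: "feet E Z P1 \<subseteq> C'" using QQsub[of 0] k3 P1_def by simp
      have "\<forall>z1\<in>feet E Z P1. \<forall>z2\<in>feet E Z P1. (Lk C' P1)\<^sup>*\<^sup>* z1 z2"
      proof (intro ballI)
        fix z1 z2 assume z: "z1 \<in> feet E Z P1" "z2 \<in> feet E Z P1"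
        have c01: "(Lk C' P1)\<^sup>*\<^sup>* (g (xs ! 0)) (g (xs ! 1))" using Lks_sym[OF c10] .
        show "(Lk C' P1)\<^sup>*\<^sup>* z1 z2" using z fP1 c10 c01 by blast
      qed
      then show ?thesis using P1(1) fs by blast
    qed
    then obtain P1 where "P1 \<in> S" "feet E Z P1 \<subseteq> C'"
       "\<forall>z1\<in>feet E Z P1. \<forall>z2\<in>feet E Z P1. (Lk C' P1)\<^sup>*\<^sup>* z1 z2" by blast
    then show ?thesis using cyc_W[OF C'Z] unfolding C'_def by blast
  qed
  have noS: "\<not> (\<exists>Cs. length Cs = s \<and> (\<forall>C\<in>set Cs. mg_cycle VH M C) \<and>
          (\<forall>i < s. \<forall>j < s. i \<noteq> j \<longrightarrow> Cs ! i \<inter> Cs ! j = {}))"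
  proof
    assume "\<exists>Cs. length Cs = s \<and> (\<forall>C\<in>set Cs. mg_cycle VH M C) \<and>
          (\<forall>i < s. \<forall>j < s. i \<noteq> j \<longrightarrow> Cs ! i \<inter> Cs ! j = {})"
    then obtain Cs where Cs: "length Cs = s" "\<forall>C\<in>set Cs. mg_cycle VH M C"
      "\<forall>i < s. \<forall>j < s. i \<noteq> j \<longrightarrow> Cs ! i \<inter> Cs ! j = {}" by blast
    define F where "F C = (SOME cyc. is_cycle V E cyc \<and> set cyc \<subseteq> WW {z\<in>Z. h z \<in> C})" for C
    have F: "is_cycle V E (F C) \<and> set (F C) \<subseteq> WW {z\<in>Z. h z \<in> C}" if "mg_cycle VH M C" for C
      unfolding F_def using someI_ex[OF key[OF that]] .
    define Ds where "Ds = map F Cs"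
    have "length Ds = s" using Cs(1) Ds_def by simp
    moreover have "\<forall>D\<in>set Ds. is_cycle V E D"
    proof
      fix D assume "D \<in> set Ds"
      then obtain C where "C \<in> set Cs" "D = F C" unfolding Ds_def by auto
      then show "is_cycle V E D" using F Cs(2) by blast
    qed
    moreover have "\<forall>i < s. \<forall>j < s. i \<noteq> j \<longrightarrow> anticomplete E (set (Ds ! i)) (set (Ds ! j))"
    proof (intro allI impI)
      fix i j assume ij: "i < s" "j < s" "i \<noteq> j"
      have mi: "mg_cycle VH M (Cs ! i)" "mg_cycle VH M (Cs ! j)" using Cs(1,2) ij by auto
      have dj: "Cs ! i \<inter> Cs ! j = {}" using Cs(3) ij by blast
      have "{z\<in>Z. h z \<in> Cs ! i} \<inter> {z\<in>Z. h z \<in> Cs ! j} = {}" using dj by blast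
      then have an: "anticomplete E (WW {z\<in>Z. h z \<in> Cs ! i}) (WW {z\<in>Z. h z \<in> Cs ! j})"
        by (intro anti_W) auto
      have "Ds ! i = F (Cs ! i)" "Ds ! j = F (Cs ! j)" using Ds_def Cs(1) ij by auto
      then have "set (Ds ! i) \<subseteq> WW {z\<in>Z. h z \<in> Cs ! i}" "set (Ds ! j) \<subseteq> WW {z\<in>Z. h z \<in> Cs ! j}"
        using F[OF mi(1)] F[OF mi(2)] by simp_all
      then show "anticomplete E (set (Ds ! i)) (set (Ds ! j))"
        by (rule anticomplete_mono[OF an])
    qed
    ultimately have "\<exists>Cs. length Cs = s \<and> (\<forall>C\<in>set Cs. is_cycle V E C) \<and>
      (\<forall>i < s. \<forall>j < s. i \<noteq> j \<longrightarrow> anticomplete E (set (Cs ! i)) (set (Cs ! j)))" by blast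
    then have "\<not> sO_free s V E" unfolding sO_free_def by simp
    then show False using mp unfolding monic_plantation_def plantation_def by blast
  qed
  obtain Y where Y: "Y \<subseteq> VH" "card Y \<le> phi" "\<forall>C. mg_cycle VH M C \<longrightarrow> C \<inter> Y \<noteq> {}"
  proof -
    have "multigraph VH M \<and> \<not> (\<exists>Cs. length Cs = s \<and> (\<forall>C\<in>set Cs. mg_cycle VH M C) \<and>
          (\<forall>i < s. \<forall>j < s. i \<noteq> j \<longrightarrow> Cs ! i \<inter> Cs ! j = {}))
     \<longrightarrow> (\<exists>Y\<subseteq>VH. card Y \<le> phi \<and> (\<forall>C. mg_cycle VH M C \<longrightarrow> C \<inter> Y \<noteq> {}))"
      using EP unfolding EP_bound_def by (elim allE)
    then have "\<exists>Y\<subseteq>VH. card Y \<le> phi \<and> (\<forall>C. mg_cycle VH M C \<longrightarrow> C \<inter> Y \<noteq> {})"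
      using conjI[OF mgH noS] by blast
    then show ?thesis using that by blast
  qed
  define X where "X = {z\<in>Z. h z \<in> Y}"
  have XZ: "X \<subseteq> Z" unfolding X_def by blast
  have "card X = card (h ` X)" using hinj XZ by (simp add: card_image inj_on_subset)
  also have "\<dots> \<le> card Y" using Y(1) finVH finite_subset X_def by (intro card_mono) auto
  finally have cX: "card X \<le> phi" using Y(2) by simp
  define T where "T = {P\<in>S. feet E Z P \<inter> X = {}}"
  have finT: "finite T" using finS T_def by simp
  define M' where "M' = image_mset f (mset_set T)"
  have M'M: "M' \<subseteq># M" unfolding M'_def M_def
    by (rule image_mset_subseteq_mono, rule subset_imp_msubset_mset_set) (use finS T_def in auto)
  have fY: "f P \<inter> Y = {}" if "P \<in> T" for P
    using that unfolding T_def f_def X_def using feet_Z by blast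
  have mg': "multigraph (VH - Y) M'" unfolding multigraph_def
  proof (intro conjI ballI)
    show "finite (VH - Y)" using finVH by simp
    fix e assume e: "e \<in># M'"
    then have "e \<in># M" using M'M by (meson mset_subset_eqD)
    then have "e \<noteq> {} \<and> e \<subseteq> VH \<and> card e \<le> 2" using mgH unfolding multigraph_def by blast
    moreover obtain P where "P \<in> T" "e = f P" using e finT unfolding M'_def by auto
    ultimately show "e \<noteq> {}" "e \<subseteq> VH - Y" "card e \<le> 2" using fY by auto
  qed
  have nc': "\<not> (\<exists>C. mg_cycle (VH - Y) M' C)"
  proof
    assume "\<exists>C. mg_cycle (VH - Y) M' C"
    then obtain C where "mg_cycle (VH - Y) M' C" by blast
    then have "mg_cycle VH M C" "C \<subseteq> VH - Y" using mg_cycle_mono[OF _ _ M'M, of "VH - Y" C VH] by auto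
    then show False using Y(3) by blast
  qed
  have "size M' \<le> card (VH - Y)" using forest_bound[OF _ mg' nc'] finVH by simp
  moreover have "size M' = card T" unfolding M'_def by simp
  moreover have "card (VH - Y) \<le> card Z"
  proof -
    have "card (VH - Y) \<le> card VH" using finVH by (simp add: card_mono)
    also have "card VH = card Z" unfolding VH_def using hinj by (simp add: card_image)
    finally show ?thesis .
  qed
  ultimately have "card T \<le> card Z" by simp
  then show ?thesis using XZ cX unfolding T_def by blast
qed

end

theorem mainTheorem12:
  fixes V :: "'a set" and E :: "'a set set" and Z :: "'a set"
    and S :: "'a list set" and s phi :: nat
  assumes "s \<ge> 1"
    and "EP_bound s phi"
    and "monic_plantation s V E Z"
    and "normal_set V E Z S"
  shows "\<exists>X\<subseteq>Z. card X \<le> phi \<and> card {P\<in>S. feet E Z P \<inter> X = {}} \<le> card Z"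
  using main_ctx[OF assms(3) assms(4) assms(2)] .

end
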